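(* If $E$ is an order continuous quasi-normed symmetric space on $I$ (with $E\subseteq c_0$ if $I=\mathbb N$), then $E\in(HC)$.
   Context: $I$ is either $[0,\alpha)$, $0<\alpha\le\infty$, with Lebesgue measure $m$, or $\mathbb N$ with counting measure $m$; $L_0(I)$ denotes complex measurable functions (resp. sequences) on $I$, and $\mu(t,f)=\inf\{s\ge0: m\{|f|>s\}\le t\}$ is the decreasing rearrangement. A quasi-normed symmetric space on $I$ is a quasi-normed space $E\subseteq L_0(I)$ such that $f\in L_0(I)$, $g\in E$, $\mu(f)\le\mu(g)$ imply $f\in E$ and $\|f\|_E\le\|g\|_E$; standing assumption: $E^*$ separates points of $E$. $E$ is order continuous if for every $f\in E$ and every sequence $0\le f_n\le |f|$ with $f_n\downarrow0$ a.e., $\|f_n\|_E\downarrow0$. The envelope norm is $\|f\|_{\widehat E}=\inf\{\sum_{i=1}^n\|f_i\|_E: f=\sum_{i=1}^nf_i,\ f_i\in E\}$. Convergence in measure: $m\{|f_n-f|>\varepsilon\}\to0$ for every $\varepsilon>0$. $E\in(HC)$ means: every sequence $(f_n)\subseteq E$ Cauchy in $\|\cdot\|_{\widehat E}$ and converging to $0$ in measure satisfies $\|f_n\|_{\widehat E}\to0$. *)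

theory Defs
  imports "HOL-Analysis.Analysis"
begin

text \<open>The measure space I is modelled as a measure M on a type 'a;
  functions in L_0(I) are complex-valued measurable functions on 'a.\<close>

definition L0 :: "'a measure \<Rightarrow> ('a \<Rightarrow> complex) set" where
  "L0 M = borel_measurable M"

text \<open>Decreasing rearrangement mu(t,f) = inf{s \<ge> 0 : m{|f|>s} \<le> t}, with value \<infinity> if the set is empty.\<close>
definition rearr :: "'a measure \<Rightarrow> ('a \<Rightarrow> complex) \<Rightarrow> real \<Rightarrow> ereal" where
  "rearr M f t = Inf {ereal s | s. 0 \<le> s \<and>
      emeasure M {x \<in> space M. s < cmod (f x)} \<le> ennreal t}"

definition quasi_normed_space ::
  "'a measure \<Rightarrow> ('a \<Rightarrow> complex) set \<Rightarrow> (('a \<Rightarrow> complex) \<Rightarrow> real) \<Rightarrow> bool" where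
  "quasi_normed_space M E N \<longleftrightarrow>
     E \<subseteq> L0 M \<and> (\<lambda>x. 0) \<in> E \<and>
     (\<forall>f\<in>E. \<forall>g\<in>E. (\<lambda>x. f x + g x) \<in> E) \<and>
     (\<forall>f\<in>E. \<forall>c::complex. (\<lambda>x. c * f x) \<in> E) \<and>
     (\<forall>f\<in>E. 0 \<le> N f) \<and>
     (\<forall>f\<in>E. N f = 0 \<longleftrightarrow> (AE x in M. f x = 0)) \<and>
     (\<forall>f\<in>E. \<forall>c::complex. N (\<lambda>x. c * f x) = cmod c * N f) \<and>
     (\<exists>C\<ge>1. \<forall>f\<in>E. \<forall>g\<in>E. N (\<lambda>x. f x + g x) \<le> C * (N f + N g))"

definition bounded_linear_functional ::
  "('a \<Rightarrow> complex) set \<Rightarrow> (('a \<Rightarrow> complex) \<Rightarrow> real) \<Rightarrow> (('a \<Rightarrow> complex) \<Rightarrow> complex) \<Rightarrow> bool" where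
  "bounded_linear_functional E N \<phi> \<longleftrightarrow>
     (\<forall>f\<in>E. \<forall>g\<in>E. \<phi> (\<lambda>x. f x + g x) = \<phi> f + \<phi> g) \<and>
     (\<forall>f\<in>E. \<forall>c::complex. \<phi> (\<lambda>x. c * f x) = c * \<phi> f) \<and>
     (\<exists>K. \<forall>f\<in>E. cmod (\<phi> f) \<le> K * N f)"

definition dual_separates ::
  "'a measure \<Rightarrow> ('a \<Rightarrow> complex) set \<Rightarrow> (('a \<Rightarrow> complex) \<Rightarrow> real) \<Rightarrow> bool" where
  "dual_separates M E N \<longleftrightarrow>
     (\<forall>f\<in>E. \<not> (AE x in M. f x = 0) \<longrightarrow>
        (\<exists>\<phi>. bounded_linear_functional E N \<phi> \<and> \<phi> f \<noteq> 0))"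

definition quasi_normed_symmetric_space ::
  "'a measure \<Rightarrow> ('a \<Rightarrow> complex) set \<Rightarrow> (('a \<Rightarrow> complex) \<Rightarrow> real) \<Rightarrow> bool" where
  "quasi_normed_symmetric_space M E N \<longleftrightarrow>
     quasi_normed_space M E N \<and>
     (\<forall>f g. f \<in> L0 M \<longrightarrow> g \<in> E \<longrightarrow> (\<forall>t\<ge>0. rearr M f t \<le> rearr M g t) \<longrightarrow>
        f \<in> E \<and> N f \<le> N g) \<and>
     dual_separates M E N"

definition order_continuous ::
  "'a measure \<Rightarrow> ('a \<Rightarrow> complex) set \<Rightarrow> (('a \<Rightarrow> complex) \<Rightarrow> real) \<Rightarrow> bool" where
  "order_continuous M E N \<longleftrightarrow>
     (\<forall>f\<in>E. \<forall>fs :: nat \<Rightarrow> 'a \<Rightarrow> real.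
        (\<forall>n. fs n \<in> borel_measurable M) \<longrightarrow>
        (\<forall>n. AE x in M. 0 \<le> fs n x \<and> fs n x \<le> cmod (f x)) \<longrightarrow>
        (AE x in M. decseq (\<lambda>n. fs n x) \<and> (\<lambda>n. fs n x) \<longlonglongrightarrow> 0) \<longrightarrow>
        (\<lambda>n. N (\<lambda>x. complex_of_real (fs n x))) \<longlonglongrightarrow> 0)"

definition env_norm ::
  "('a \<Rightarrow> complex) set \<Rightarrow> (('a \<Rightarrow> complex) \<Rightarrow> real) \<Rightarrow> ('a \<Rightarrow> complex) \<Rightarrow> real" where
  "env_norm E N f = Inf {(\<Sum>i<n. N (fs i)) | (n::nat) fs.
      (\<forall>i<n. fs i \<in> E) \<and> f = (\<lambda>x. \<Sum>i<n. fs i x)}"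

definition converges_in_measure ::
  "'a measure \<Rightarrow> (nat \<Rightarrow> 'a \<Rightarrow> complex) \<Rightarrow> ('a \<Rightarrow> complex) \<Rightarrow> bool" where
  "converges_in_measure M fs f \<longleftrightarrow>
     (\<forall>\<epsilon>>0. (\<lambda>n. emeasure M {x \<in> space M. \<epsilon> < cmod (fs n x - f x)}) \<longlonglongrightarrow> 0)"

definition HC ::
  "'a measure \<Rightarrow> ('a \<Rightarrow> complex) set \<Rightarrow> (('a \<Rightarrow> complex) \<Rightarrow> real) \<Rightarrow> bool" where
  "HC M E N \<longleftrightarrow>
     (\<forall>fs :: nat \<Rightarrow> 'a \<Rightarrow> complex.
        (\<forall>n. fs n \<in> E) \<longrightarrow>
        (\<forall>\<epsilon>>0. \<exists>K. \<forall>m\<ge>K. \<forall>n\<ge>K. env_norm E N (\<lambda>x. fs m x - fs n x) < \<epsilon>) \<longrightarrow>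
        converges_in_measure M fs (\<lambda>x. 0) \<longrightarrow>
        (\<lambda>n. env_norm E N (fs n)) \<longlonglongrightarrow> 0)"

end

theory Submission
  imports Defs
begin



lemma qs_facts:
  assumes "quasi_normed_symmetric_space M E N"
  shows qs_meas: "\<And>f. f \<in> E \<Longrightarrow> f \<in> borel_measurable M"
    and qs_add: "\<And>f g. f \<in> E \<Longrightarrow> g \<in> E \<Longrightarrow> (\<lambda>x. f x + g x) \<in> E"
    and qs_scale: "\<And>f c. f \<in> E \<Longrightarrow> (\<lambda>x. c * f x) \<in> E"
    and qs_nonneg: "\<And>f. f \<in> E \<Longrightarrow> 0 \<le> N f"
    and qs_Nscale: "\<And>f c. f \<in> E \<Longrightarrow> N (\<lambda>x. c * f x) = cmod c * N f"
  using assms unfolding quasi_normed_symmetric_space_def quasi_normed_space_def L0_def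
  by blast+

lemma qs_lattice:
  assumes qs: "quasi_normed_symmetric_space M E N"
    and f: "f \<in> borel_measurable M" and g: "g \<in> E"
    and le: "\<And>x. x \<in> space M \<Longrightarrow> cmod (f x) \<le> cmod (g x)"
  shows "f \<in> E \<and> N f \<le> N g"
proof -
  have gm: "g \<in> borel_measurable M" using qs_meas[OF qs g] .
  have "rearr M f t \<le> rearr M g t" for t
  proof -
    have "{ereal s | s. 0 \<le> s \<and> emeasure M {x \<in> space M. s < cmod (g x)} \<le> ennreal t}
      \<subseteq> {ereal s | s. 0 \<le> s \<and> emeasure M {x \<in> space M. s < cmod (f x)} \<le> ennreal t}"
    proof safe
      fix s assume "0 \<le> s" "emeasure M {x \<in> space M. s < cmod (g x)} \<le> ennreal t"
      moreover have "emeasure M {x \<in> space M. s < cmod (f x)} \<le> emeasure M {x \<in> space M. s < cmod (g x)}"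
        apply (rule emeasure_mono)
        using le apply fastforce
        using gm by measurable
      ultimately show "\<exists>s'. ereal s = ereal s' \<and> 0 \<le> s' \<and> emeasure M {x \<in> space M. s' < cmod (f x)} \<le> ennreal t"
        by (intro exI[of _ s]) (auto intro: order_trans)
    qed
    then show ?thesis unfolding rearr_def by (rule Inf_superset_mono)
  qed
  then show ?thesis using qs f g unfolding quasi_normed_symmetric_space_def L0_def by blast
qed

definition decs where
  "decs E N f = {(\<Sum>i<n. N (fs i)) | (n::nat) fs. (\<forall>i<n. fs i \<in> E) \<and> f = (\<lambda>x. \<Sum>i<n. fs i x)}"

lemma env_eq: "env_norm E N f = Inf (decs E N f)"
  unfolding env_norm_def decs_def by simp

lemma decs_nonneg: assumes qs: "quasi_normed_symmetric_space M E N"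
  shows "s \<in> decs E N f \<Longrightarrow> 0 \<le> s"
  unfolding decs_def using qs_nonneg[OF qs] by (auto intro!: sum_nonneg)

lemma decs_E: "f \<in> E \<Longrightarrow> N f \<in> decs E N f"
  unfolding decs_def
  apply (rule CollectI)
  apply (rule exI[of _ 1])
  apply (rule exI[of _ "\<lambda>_. f"])
  by auto

lemma env_le_N: assumes qs: "quasi_normed_symmetric_space M E N" and "f \<in> E"
  shows "env_norm E N f \<le> N f"
  unfolding env_eq
  apply (rule cInf_lower)
  using decs_E[of f E N] assms(2) apply simp
  using decs_nonneg[OF qs] by (auto simp: bdd_below_def)

lemma env_nonneg: assumes qs: "quasi_normed_symmetric_space M E N" and "f \<in> E"
  shows "0 \<le> env_norm E N f"
  unfolding env_eq
  apply (rule cInf_greatest)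
  using decs_E[of f E N] assms(2) apply blast
  using decs_nonneg[OF qs] by auto

lemma env_add: assumes qs: "quasi_normed_symmetric_space M E N" and g: "g \<in> E" and k: "k \<in> E"
  shows "env_norm E N (\<lambda>x. g x + k x) \<le> N g + env_norm E N k"
proof -
  have "env_norm E N (\<lambda>x. g x + k x) - N g \<le> Inf (decs E N k)"
  proof (rule cInf_greatest)
    show "decs E N k \<noteq> {}" using decs_E[OF k] by blast
  next
    fix s assume "s \<in> decs E N k"
    then have "\<exists>(n::nat) fs. s = (\<Sum>i<n. N (fs i)) \<and> (\<forall>i<n. fs i \<in> E) \<and> k = (\<lambda>x. \<Sum>i<n. fs i x)"
      unfolding decs_def by (simp only: mem_Collect_eq)
    then obtain n :: nat and fs where fs: "\<forall>i<n. fs i \<in> E" "k = (\<lambda>x. \<Sum>i<n. fs i x)" "s = (\<Sum>i<n. N (fs i))"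
      by blast
    define gs where "gs i = (case i of 0 \<Rightarrow> g | Suc j \<Rightarrow> fs j)" for i
    have "(\<Sum>i<Suc n. N (gs i)) \<in> decs E N (\<lambda>x. g x + k x)"
      unfolding decs_def
      apply (rule CollectI, rule exI[of _ "Suc n"], rule exI[of _ gs])
      using fs g by (auto simp: gs_def sum.lessThan_Suc_shift simp del: sum.lessThan_Suc split: nat.splits)
    moreover have "(\<Sum>i<Suc n. N (gs i)) = N g + s"
      using fs by (simp add: gs_def sum.lessThan_Suc_shift del: sum.lessThan_Suc)
    ultimately have "env_norm E N (\<lambda>x. g x + k x) \<le> N g + s"
      unfolding env_eq
      using decs_nonneg[OF qs] by (metis bdd_belowI cInf_lower)
    then show "env_norm E N (\<lambda>x. g x + k x) - N g \<le> s" by simp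
  qed
  then show ?thesis unfolding env_eq by simp
qed

lemma env_restrict: assumes qs: "quasi_normed_symmetric_space M E N" and k: "k \<in> E"
  and P: "{x \<in> space M. P x} \<in> sets M"
  shows "env_norm E N (\<lambda>x. if P x then k x else 0) \<le> env_norm E N k"
  unfolding env_eq[of E N k]
proof (rule cInf_greatest)
  show "decs E N k \<noteq> {}" using decs_E[OF k] by blast
next
  fix s assume "s \<in> decs E N k"
  then have "\<exists>(n::nat) fs. s = (\<Sum>i<n. N (fs i)) \<and> (\<forall>i<n. fs i \<in> E) \<and> k = (\<lambda>x. \<Sum>i<n. fs i x)"
    unfolding decs_def by (simp only: mem_Collect_eq)
  then obtain n :: nat and fs where fs: "\<forall>i<n. fs i \<in> E" "k = (\<lambda>x. \<Sum>i<n. fs i x)" "s = (\<Sum>i<n. N (fs i))"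
    by blast
  define gs where "gs i = (\<lambda>x. if P x then fs i x else 0)" for i
  have gsE: "gs i \<in> E \<and> N (gs i) \<le> N (fs i)" if "i < n" for i
    apply (rule qs_lattice[OF qs])
    unfolding gs_def
      apply (rule measurable_If[OF qs_meas[OF qs] _ P])
    using fs that by auto
  have "(\<Sum>i<n. N (gs i)) \<in> decs E N (\<lambda>x. if P x then k x else 0)"
    unfolding decs_def
    apply (rule CollectI, rule exI[of _ n], rule exI[of _ gs])
    using fs gsE by (auto simp: gs_def)
  then have "env_norm E N (\<lambda>x. if P x then k x else 0) \<le> (\<Sum>i<n. N (gs i))"
    unfolding env_eq
    using decs_nonneg[OF qs] by (metis bdd_belowI cInf_lower)
  also have "\<dots> \<le> s" using fs gsE by (auto intro!: sum_mono)
  finally show "env_norm E N (\<lambda>x. if P x then k x else 0) \<le> s" .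
qed



lemma key:
  assumes qs: "quasi_normed_symmetric_space M E N"
    and oc: "order_continuous M E N"
    and hE: "h \<in> E" and hsE: "\<And>m. hs m \<in> E"
    and env: "\<And>m. env_norm E N (hs m) \<le> \<epsilon>"
    and conv: "\<And>\<eta>. \<eta> > 0 \<Longrightarrow> (\<lambda>m. emeasure M {x\<in>space M. \<eta> < cmod (hs m x - h x)}) \<longlonglongrightarrow> 0"
  shows "env_norm E N h \<le> \<epsilon>"
proof (rule field_le_epsilon)
  fix e :: real assume e: "0 < e"
  have hm[measurable]: "h \<in> borel_measurable M" using qs_meas[OF qs hE] .
  have hsm[measurable]: "\<And>m. hs m \<in> borel_measurable M" using qs_meas[OF qs hsE] .
  have Nh: "0 \<le> N h" using qs_nonneg[OF qs hE] .
  define \<delta> where "\<delta> = e / (3 * (N h + 1))"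
  have \<delta>pos: "0 < \<delta>" using e Nh by (simp add: \<delta>_def)
  have \<delta>N: "\<delta> * N h \<le> e / 3"
  proof -
    have "\<delta> * N h = e / 3 * (N h / (N h + 1))" by (simp add: \<delta>_def field_simps)
    also have "\<dots> \<le> e / 3 * 1" using e Nh by (intro mult_left_mono) auto
    finally show ?thesis by simp
  qed
  define fA where "fA k x = (if cmod (h x) < inverse (real (Suc k)) then cmod (h x) else 0)" for k x
  have fAm[measurable]: "fA k \<in> borel_measurable M" for k unfolding fA_def by measurable
  have "(\<lambda>k. N (\<lambda>x. complex_of_real (fA k x))) \<longlonglongrightarrow> 0"
  proof (rule oc[unfolded order_continuous_def, rule_format, OF hE])
    show "fA n \<in> borel_measurable M" for n by simp
    show "AE x in M. 0 \<le> fA n x \<and> fA n x \<le> cmod (h x)" for n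
      by (rule AE_I2) (simp add: fA_def)
    show "AE x in M. decseq (\<lambda>n. fA n x) \<and> (\<lambda>n. fA n x) \<longlonglongrightarrow> 0"
    proof (rule AE_I2, intro conjI)
      fix x
      show "decseq (\<lambda>n. fA n x)"
      proof (rule decseq_SucI)
        fix n
        have "inverse (real (Suc (Suc n))) \<le> inverse (real (Suc n))"
          by (simp add: field_simps)
        then show "fA (Suc n) x \<le> fA n x" unfolding fA_def by (smt (verit) norm_ge_zero)
      qed
      show "(\<lambda>n. fA n x) \<longlonglongrightarrow> 0"
      proof (cases "h x = 0")
        case True then show ?thesis by (simp add: fA_def)
      next
        case False
        then have "cmod (h x) > 0" by simp
        from order_tendstoD(2)[OF LIMSEQ_inverse_real_of_nat this]
        have "eventually (\<lambda>n. fA n x = 0) sequentially"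
          by eventually_elim (auto simp: fA_def)
        then show ?thesis by (rule tendsto_eventually)
      qed
    qed
  qed
  from order_tendstoD(2)[OF this, of "e/3"] e
  obtain kA where kA: "N (\<lambda>x. complex_of_real (fA kA x)) < e / 3"
    by (auto simp: eventually_sequentially)
  define c where "c = inverse (real (Suc kA))"
  have cpos: "0 < c" by (simp add: c_def)
  have fAE: "(\<lambda>x. complex_of_real (fA kA x)) \<in> E"
    by (rule conjunct1[OF qs_lattice[OF qs _ hE]]) (auto simp: fA_def)
  define a where "a x = (if cmod (h x) < c then h x else 0)" for x
  have am: "a \<in> borel_measurable M" unfolding a_def by measurable
  have aE: "a \<in> E \<and> N a \<le> N (\<lambda>x. complex_of_real (fA kA x))"
    by (rule qs_lattice[OF qs am fAE]) (auto simp: a_def fA_def c_def)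
  define \<eta> where "\<eta> = \<delta> * c"
  have \<eta>pos: "0 < \<eta>" using \<delta>pos cpos by (simp add: \<eta>_def)
  define Bs where "Bs m = {x\<in>space M. \<eta> < cmod (hs m x - h x)}" for m
  have Bsm[measurable]: "Bs m \<in> sets M" for m unfolding Bs_def by measurable
  have "\<exists>m. emeasure M (Bs m) < ennreal ((1/2)^j)" for j
  proof -
    have "0 < ennreal ((1/2::real)^j)" by simp
    from order_tendstoD(2)[OF conv[OF \<eta>pos] this]
    show ?thesis by (auto simp: Bs_def eventually_sequentially)
  qed
  then obtain msel where msel: "\<And>j. emeasure M (Bs (msel j)) < ennreal ((1/2)^j)"
    by metis
  define C where "C k = (\<Union>i. Bs (msel (i + k)))" for k
  have Cm[measurable]: "C k \<in> sets M" for k unfolding C_def by measurable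
  have Canti: "C k' \<subseteq> C k" if "k \<le> k'" for k k'
  proof
    fix x assume "x \<in> C k'"
    then obtain i where "x \<in> Bs (msel (i + k'))" unfolding C_def by auto
    then have "x \<in> Bs (msel ((i + k' - k) + k))" using that by simp
    then show "x \<in> C k" unfolding C_def by blast
  qed
  have Cbound: "emeasure M (C k) \<le> ennreal (2 * (1/2)^k)" for k
  proof -
    have sg: "summable (\<lambda>i. (1/2::real)^(i + k))"
      by (simp add: power_add summable_mult2)
    have "emeasure M (C k) \<le> (\<Sum>i. emeasure M (Bs (msel (i + k))))"
      unfolding C_def by (rule emeasure_subadditive_countably) auto
    also have "\<dots> \<le> (\<Sum>i. ennreal ((1/2)^(i + k)))"
      by (intro suminf_le) (auto intro: less_imp_le msel)
    also have "\<dots> = ennreal (\<Sum>i. (1/2::real)^(i + k))"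
      by (rule suminf_ennreal2) (use sg in auto)
    also have "(\<Sum>i. (1/2::real)^(i + k)) = 2 * (1/2)^k"
    proof -
      have "(\<Sum>i. (1/2::real)^(i + k)) = (\<Sum>i. (1/2::real)^i * (1/2)^k)"
        by (simp add: power_add)
      also have "\<dots> = (\<Sum>i. (1/2::real)^i) * (1/2)^k"
        by (rule suminf_mult2[symmetric]) (simp add: summable_geometric)
      also have "(\<Sum>i. (1/2::real)^i) = 2" using suminf_geometric[of "1/2::real"] by simp
      finally show ?thesis by simp
    qed
    finally show ?thesis .
  qed
  define Z where "Z = (\<Inter>k. C k)"
  have Zm: "Z \<in> sets M" unfolding Z_def by measurable
  have "emeasure M Z \<le> 0"
  proof (rule tendsto_le[OF trivial_limit_sequentially _ tendsto_const])
    have "(\<lambda>k. 2 * (1/2::real)^k) \<longlonglongrightarrow> 2 * 0"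
      by (intro tendsto_mult tendsto_const LIMSEQ_power_zero) simp
    then show "(\<lambda>k. ennreal (2 * (1/2)^k)) \<longlonglongrightarrow> 0"
      using tendsto_ennrealI by fastforce
    show "\<forall>\<^sub>F k in sequentially. emeasure M Z \<le> ennreal (2 * (1/2)^k)"
    proof (rule always_eventually, rule allI)
      fix k
      have "emeasure M Z \<le> emeasure M (C k)"
        by (rule emeasure_mono) (auto simp: Z_def)
      then show "emeasure M Z \<le> ennreal (2 * (1/2)^k)" using Cbound order_trans by blast
    qed
  qed
  then have Znull: "Z \<in> null_sets M" using Zm by (auto intro: null_setsI)
  define fB where "fB k x = cmod (h x) * indicator (C k) x" for k x
  have fBm[measurable]: "fB k \<in> borel_measurable M" for k unfolding fB_def by measurable
  have "(\<lambda>k. N (\<lambda>x. complex_of_real (fB k x))) \<longlonglongrightarrow> 0"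
  proof (rule oc[unfolded order_continuous_def, rule_format, OF hE])
    show "fB n \<in> borel_measurable M" for n by simp
    show "AE x in M. 0 \<le> fB n x \<and> fB n x \<le> cmod (h x)" for n
      by (rule AE_I2) (simp add: fB_def indicator_def)
    show "AE x in M. decseq (\<lambda>n. fB n x) \<and> (\<lambda>n. fB n x) \<longlonglongrightarrow> 0"
      using AE_not_in[OF Znull]
    proof (rule AE_mp, intro AE_I2 impI conjI)
      fix x assume xZ: "x \<notin> Z"
      show "decseq (\<lambda>n. fB n x)"
        unfolding decseq_def fB_def using Canti
        by (auto simp: indicator_def intro!: mult_left_mono)
      from xZ obtain k0 where k0: "x \<notin> C k0" unfolding Z_def by auto
      have "eventually (\<lambda>n. fB n x = 0) sequentially"
        unfolding eventually_sequentially
        using k0 Canti by (auto simp: fB_def indicator_def)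
      then show "(\<lambda>n. fB n x) \<longlonglongrightarrow> 0" by (rule tendsto_eventually)
    qed
  qed
  from order_tendstoD(2)[OF this, of "e/3"] e
  obtain kB where kB: "N (\<lambda>x. complex_of_real (fB kB x)) < e / 3"
    by (auto simp: eventually_sequentially)
  have fBE: "(\<lambda>x. complex_of_real (fB kB x)) \<in> E"
    by (rule conjunct1[OF qs_lattice[OF qs _ hE]]) (auto simp: fB_def indicator_def)
  define m where "m = msel kB"
  define b where "b x = (if \<not> cmod (h x) < c \<and> \<eta> < cmod (hs m x - h x) then h x else 0)" for x
  have bE: "b \<in> E \<and> N b \<le> N (\<lambda>x. complex_of_real (fB kB x))"
  proof (rule qs_lattice[OF qs _ fBE])
    show "b \<in> borel_measurable M" unfolding b_def by measurable
    fix x assume x: "x \<in> space M"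
    show "cmod (b x) \<le> cmod (complex_of_real (fB kB x))"
    proof (cases "\<not> cmod (h x) < c \<and> \<eta> < cmod (hs m x - h x)")
      case True
      then have "x \<in> Bs (msel (0 + kB))" using x by (simp add: Bs_def m_def)
      then have "x \<in> C kB" unfolding C_def by blast
      then show ?thesis using True by (simp add: b_def fB_def)
    next
      case False then show ?thesis unfolding b_def by (simp only: if_False) simp
    qed
  qed
  define D where "D x = (\<not> cmod (h x) < c \<and> \<not> \<eta> < cmod (hs m x - h x))" for x
  have Dm: "{x\<in>space M. D x} \<in> sets M" unfolding D_def by measurable
  define d where "d x = (if D x then h x - hs m x else 0)" for x
  have hdE: "(\<lambda>x. complex_of_real \<delta> * h x) \<in> E" using qs_scale[OF qs hE] .
  have dE: "d \<in> E \<and> N d \<le> N (\<lambda>x. complex_of_real \<delta> * h x)"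
  proof (rule qs_lattice[OF qs _ hdE])
    show "d \<in> borel_measurable M" unfolding d_def D_def by measurable
    fix x assume x: "x \<in> space M"
    show "cmod (d x) \<le> cmod (complex_of_real \<delta> * h x)"
    proof (cases "D x")
      case True
      then have "cmod (h x - hs m x) \<le> \<eta>" unfolding D_def by (simp add: norm_minus_commute)
      also have "\<eta> \<le> \<delta> * cmod (h x)" unfolding \<eta>_def using True \<delta>pos
        by (intro mult_left_mono) (auto simp: D_def)
      finally show ?thesis using True \<delta>pos by (simp add: d_def norm_mult)
    next
      case False then show ?thesis by (simp add: d_def)
    qed
  qed
  have Nd: "N d \<le> e / 3"
    using dE qs_Nscale[OF qs hE, of "complex_of_real \<delta>"] \<delta>pos \<delta>N by simp
  define c' where "c' x = (if D x then hs m x else 0)" for x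
  have c'm: "c' \<in> borel_measurable M" unfolding c'_def D_def by measurable
  have c'E: "c' \<in> E"
    by (rule conjunct1[OF qs_lattice[OF qs c'm hsE[of m]]])
       (auto simp: c'_def D_def)
  have envc': "env_norm E N c' \<le> \<epsilon>"
    using env_restrict[OF qs hsE[of m] Dm] env[of m] unfolding c'_def by simp
  have decomp: "h = (\<lambda>x. a x + ((\<lambda>x. b x + ((\<lambda>x. d x + c' x) x)) x))"
    by (rule ext) (auto simp: a_def b_def d_def c'_def D_def)
  have dc'E: "(\<lambda>x. d x + c' x) \<in> E" using qs_add[OF qs] dE c'E by blast
  have bdc'E: "(\<lambda>x. b x + ((\<lambda>x. d x + c' x) x)) \<in> E" using qs_add[OF qs] bE dc'E by blast
  have "env_norm E N h \<le> N a + env_norm E N (\<lambda>x. b x + ((\<lambda>x. d x + c' x) x))"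
    by (subst decomp, rule env_add[OF qs _ bdc'E]) (use aE in blast)
  also have "env_norm E N (\<lambda>x. b x + ((\<lambda>x. d x + c' x) x)) \<le> N b + env_norm E N (\<lambda>x. d x + c' x)"
    by (rule env_add[OF qs _ dc'E]) (use bE in blast)
  also have "env_norm E N (\<lambda>x. d x + c' x) \<le> N d + env_norm E N c'"
    by (rule env_add[OF qs _ c'E]) (use dE in blast)
  finally show "env_norm E N h \<le> \<epsilon> + e"
    using aE kA bE kB Nd envc' by linarith
qed



lemma HC_general:
  assumes qs: "quasi_normed_symmetric_space M E N"
    and oc: "order_continuous M E N"
  shows "HC M E N"
  unfolding HC_def
proof (intro allI impI)
  fix fs :: "nat \<Rightarrow> 'a \<Rightarrow> complex"
  assume fsE: "\<forall>n. fs n \<in> E"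
    and cau: "\<forall>\<epsilon>>0. \<exists>K. \<forall>m\<ge>K. \<forall>n\<ge>K. env_norm E N (\<lambda>x. fs m x - fs n x) < \<epsilon>"
    and cim: "converges_in_measure M fs (\<lambda>x. 0)"
  show "(\<lambda>n. env_norm E N (fs n)) \<longlonglongrightarrow> 0"
  proof (rule LIMSEQ_I)
    fix r :: real assume r: "0 < r"
    then obtain K where K: "\<forall>m\<ge>K. \<forall>n\<ge>K. env_norm E N (\<lambda>x. fs m x - fs n x) < r / 2"
      using cau by (meson half_gt_zero)
    have "norm (env_norm E N (fs n) - 0) < r" if n: "n \<ge> K" for n
    proof -
      define hs where "hs m = (\<lambda>x. fs n x - fs (m + K) x)" for m
      have hsE: "hs m \<in> E" for m
      proof -
        have "(\<lambda>x. fs n x + (\<lambda>x. (-1) * fs (m + K) x) x) \<in> E"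
          using qs_add[OF qs] qs_scale[OF qs] fsE by blast
        then show ?thesis by (simp add: hs_def)
      qed
      have "env_norm E N (fs n) \<le> r / 2"
      proof (rule key[OF qs oc _ hsE])
        show "fs n \<in> E" using fsE by blast
        show "env_norm E N (hs m) \<le> r / 2" for m
          using K n unfolding hs_def by (meson le_add2 less_imp_le order_trans)
        fix \<eta> :: real assume "\<eta> > 0"
        with cim have "(\<lambda>m. emeasure M {x\<in>space M. \<eta> < cmod (fs m x - 0)}) \<longlonglongrightarrow> 0"
          unfolding converges_in_measure_def by blast
        from LIMSEQ_ignore_initial_segment[OF this, of K]
        show "(\<lambda>m. emeasure M {x\<in>space M. \<eta> < cmod (hs m x - fs n x)}) \<longlonglongrightarrow> 0"
          by (simp add: hs_def norm_minus_commute)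
      qed
      moreover have "0 \<le> env_norm E N (fs n)" using env_nonneg[OF qs] fsE by blast
      ultimately show ?thesis using r by simp
    qed
    then show "\<exists>no. \<forall>n\<ge>no. norm (env_norm E N (fs n) - 0) < r" by blast
  qed
qed


theorem mainTheorem4:
  shows "(\<forall>(\<alpha>::ereal) (E :: (real \<Rightarrow> complex) set) N.
            0 < \<alpha> \<longrightarrow>
            quasi_normed_symmetric_space (lebesgue_on {x. 0 \<le> x \<and> ereal x < \<alpha>}) E N \<longrightarrow>
            order_continuous (lebesgue_on {x. 0 \<le> x \<and> ereal x < \<alpha>}) E N \<longrightarrow>
            HC (lebesgue_on {x. 0 \<le> x \<and> ereal x < \<alpha>}) E N)
       \<and> (\<forall>(E :: (nat \<Rightarrow> complex) set) N.
            quasi_normed_symmetric_space (count_space UNIV) E N \<longrightarrow>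
            order_continuous (count_space UNIV) E N \<longrightarrow>
            (\<forall>f\<in>E. f \<longlonglongrightarrow> 0) \<longrightarrow>
            HC (count_space UNIV) E N)"
  by (intro conjI allI impI HC_general)

end
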